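(* Let $K$ be an arbitrary field, $n\ge1$, and let $\mathcal J\subset A$ be the ideal generated by $T_1,\dots,T_n$ and the entries of $\Phi^2$. Then for all $1\le p\le n$, $1\le r\le p$, and all $a_1,\dots,a_{p-r},b_1,\dots,b_{p-r}\in[1,n]$, the polynomial $$\mathrm{Rel}(r,p)=\sum_{1\le i_1<\dots<i_r\le n}M(a_1,\dots,a_{p-r},i_1,\dots,i_r;\,b_1,\dots,b_{p-r},i_1,\dots,i_r)$$ lies in $\mathcal J$.
   Context: $A=K[\Phi_{a,b}:1\le a,b\le n]$ with generic matrix $\Phi=(\Phi_{a,b})$. $M(a_1,\dots,a_s;b_1,\dots,b_s)=\det(\Phi_{a_k,b_l})_{1\le k,l\le s}$ for index sequences in $[1,n]$ (zero if an index repeats). $T_i$ is the sum of the principal $i\times i$ minors of $\Phi$. *)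

theory Defs
  imports "HOL-Library.Poly_Mapping" "HOL-Combinatorics.Permutations"
begin

text \<open>The polynomial ring A = K[Phi_{a,b}]: polynomials in variables indexed by
pairs (a,b) of naturals (only 1 <= a,b <= n are used), represented as finitely
supported maps from monomials (finitely supported exponent vectors) to coefficients.\<close>

type_synonym 'k mpoly = "((nat \<times> nat) \<Rightarrow>\<^sub>0 nat) \<Rightarrow>\<^sub>0 'k"

definition Phi :: "nat \<Rightarrow> nat \<Rightarrow> 'k::field mpoly" where
  "Phi a b = Poly_Mapping.single (Poly_Mapping.single (a, b) 1) 1"

text \<open>Minor M(as; bs) = det (Phi_{as_k, bs_l}), via the Leibniz formula
(automatically zero when an index repeats).\<close>
definition minor :: "nat list \<Rightarrow> nat list \<Rightarrow> 'k::field mpoly" where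
  "minor as bs = (\<Sum>\<sigma> | \<sigma> permutes {0..<length as}.
      of_int (sign \<sigma>) * (\<Prod>k<length as. Phi (as ! k) (bs ! (\<sigma> k))))"

definition T :: "nat \<Rightarrow> nat \<Rightarrow> 'k::field mpoly" where
  "T n i = (\<Sum>S | S \<subseteq> {1..n} \<and> card S = i.
      minor (sorted_list_of_set S) (sorted_list_of_set S))"

definition Phi_sq :: "nat \<Rightarrow> nat \<Rightarrow> nat \<Rightarrow> 'k::field mpoly" where
  "Phi_sq n a c = (\<Sum>b=1..n. Phi a b * Phi b c)"

definition in_ideal :: "'a::comm_ring_1 set \<Rightarrow> 'a \<Rightarrow> bool" where
  "in_ideal G x \<longleftrightarrow> (\<exists>F c. finite F \<and> F \<subseteq> G \<and> x = (\<Sum>g\<in>F. c g * g))"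

definition J_gens :: "nat \<Rightarrow> 'k::field mpoly set" where
  "J_gens n = {T n i | i. 1 \<le> i \<and> i \<le> n} \<union> {Phi_sq n a c | a c. a \<in> {1..n} \<and> c \<in> {1..n}}"

definition Rel :: "nat \<Rightarrow> nat \<Rightarrow> nat list \<Rightarrow> nat list \<Rightarrow> 'k::field mpoly" where
  "Rel n r as bs = (\<Sum>S | S \<subseteq> {1..n} \<and> card S = r.
      minor (as @ sorted_list_of_set S) (bs @ sorted_list_of_set S))"

end

theory Submission
  imports Defs "Jordan_Normal_Form.Determinant"
begin

definition mm :: "(nat \<Rightarrow> nat \<Rightarrow> 'a) \<Rightarrow> nat list \<Rightarrow> nat list \<Rightarrow> 'a mat" where
  "mm X as bs = mat (length as) (length as) (\<lambda>(i,j). X (as!i) (bs!j))"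

definition mnr :: "(nat \<Rightarrow> nat \<Rightarrow> 'a::comm_ring_1) \<Rightarrow> nat list \<Rightarrow> nat list \<Rightarrow> 'a" where
  "mnr X as bs = det (mm X as bs)"

definition dl :: "nat \<Rightarrow> 'a list \<Rightarrow> 'a list" where
  "dl j xs = take j xs @ drop (Suc j) xs"

lemma minor_eq: "minor as bs = mnr Phi as bs"
  unfolding minor_def mnr_def mm_def det_def
  by (simp add: atLeast0LessThan)

lemma mm_carrier[simp]: "mm X as bs \<in> carrier_mat (length as) (length as)"
  by (simp add: mm_def)

lemma mnr_swap:
  assumes "Suc i < length xs"
  shows "mnr X (xs[i := xs!Suc i, Suc i := xs!i]) ys = - mnr X xs ys"
proof -
  have "mm X (xs[i := xs!Suc i, Suc i := xs!i]) ys = swaprows i (Suc i) (mm X xs ys)"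
    using assms by (auto intro!: eq_matI simp: mm_def nth_list_update mat_swaprows_def)
  then show ?thesis unfolding mnr_def
    using det_swaprows[of i "length xs" "Suc i" "mm X xs ys"] assms by simp
qed

lemma mnr_swap2: "mnr X (u @ x # y # v) ys = - mnr X (u @ y # x # v) ys"
proof -
  let ?xs = "u @ y # x # v"
  have "?xs[length u := ?xs!Suc (length u), Suc (length u) := ?xs!length u] = u @ x # y # v"
    by (simp add: list_update_append nth_append)
  then show ?thesis using mnr_swap[of "length u" ?xs X ys] by simp
qed

lemma mnr_move:
  "p < length zs \<Longrightarrow> mnr X (u @ (zs!p) # dl p zs) ys = (-1)^p * mnr X (u @ zs) ys"
proof (induction p arbitrary: u zs)
  case 0 then show ?case by (cases zs) (auto simp: dl_def)
next
  case (Suc q)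
  then obtain z zs' where zs: "zs = z # zs'" by (cases zs) auto
  with Suc have q: "q < length zs'" by simp
  have "u @ (zs!Suc q) # dl (Suc q) zs = u @ (zs'!q) # z # dl q zs'" by (simp add: zs dl_def)
  then have "mnr X (u @ (zs!Suc q) # dl (Suc q) zs) ys = - mnr X (u @ z # (zs'!q) # dl q zs') ys"
    using mnr_swap2 by metis
  also have "u @ z # (zs'!q) # dl q zs' = (u @ [z]) @ (zs'!q) # dl q zs'" by simp
  also have "mnr X \<dots> ys = (-1)^q * mnr X ((u@[z]) @ zs') ys" using Suc.IH[OF q] .
  finally show ?case by (simp add: zs)
qed

lemma mnr_dup:
  assumes "i < length xs" "j < length xs" "i \<noteq> j" "xs!i = xs!j"
  shows "mnr X xs ys = 0"
  unfolding mnr_def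
  apply (rule det_identical_rows[OF mm_carrier assms(3,1,2)])
  using assms by (auto intro!: eq_vecI simp: mm_def row_def)

lemma dl_nth: "j < length ys \<Longrightarrow> j' < length ys - 1 \<Longrightarrow> dl j ys ! j' = ys ! (if j' < j then j' else Suc j')"
  by (auto simp: dl_def nth_append min_def)

lemma length_dl[simp]: "j < length ys \<Longrightarrow> length (dl j ys) = length ys - 1"
  by (auto simp: dl_def min_def)

lemma mnr_laplace:
  assumes "length ys = Suc (length a)"
  shows "mnr X (a0 # a) ys = (\<Sum>j<length ys. (-1)^j * X a0 (ys!j) * mnr X a (dl j ys))"
proof -
  have "mnr X (a0#a) ys = (\<Sum>j<Suc (length a). mm X (a0#a) ys $$ (0,j) * cofactor (mm X (a0#a) ys) 0 j)"
    unfolding mnr_def by (rule laplace_expansion_row) (auto simp: mm_def)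
  also have "\<dots> = (\<Sum>j<length ys. (-1)^j * X a0 (ys!j) * mnr X a (dl j ys))"
  proof (rule sum.cong)
    fix j assume j: "j \<in> {..<length ys}"
    have "mat_delete (mm X (a0#a) ys) 0 j = mm X a (dl j ys)"
      using j assms by (auto intro!: eq_matI simp: mat_delete_def mm_def dl_nth)
    then show "mm X (a0#a) ys $$ (0,j) * cofactor (mm X (a0#a) ys) 0 j = (-1)^j * X a0 (ys!j) * mnr X a (dl j ys)"
      using j assms by (simp add: cofactor_def mnr_def mm_def)
  qed (simp add: assms)
  finally show ?thesis .
qed

definition RelX :: "(nat \<Rightarrow> nat \<Rightarrow> 'a::comm_ring_1) \<Rightarrow> nat \<Rightarrow> nat \<Rightarrow> nat list \<Rightarrow> nat list \<Rightarrow> 'a" where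
  "RelX X n r as bs = (\<Sum>S | S \<subseteq> {1..n} \<and> card S = r.
      mnr X (as @ sorted_list_of_set S) (bs @ sorted_list_of_set S))"

lemma Rel_eq: "Rel n r as bs = RelX Phi n r as bs"
  by (simp add: Rel_def RelX_def minor_eq)

lemma remove1_dl: "distinct L \<Longrightarrow> t < length L \<Longrightarrow> remove1 (L!t) L = dl t L"
proof (induction L arbitrary: t)
  case Nil then show ?case by simp
next
  case (Cons x L)
  show ?case
  proof (cases t)
    case 0 then show ?thesis by (simp add: dl_def)
  next
    case (Suc t')
    then have "L!t' \<noteq> x" using Cons.prems by auto
    then show ?thesis using Cons Suc by (simp add: dl_def)
  qed
qed

lemma sum_sorted_pos:
  assumes "finite S"
  shows "(\<Sum>t<card S. g (sorted_list_of_set S ! t) (dl t (sorted_list_of_set S)))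
       = (\<Sum>i\<in>S. g i (sorted_list_of_set (S - {i})))"
proof -
  let ?L = "sorted_list_of_set S"
  have b: "bij_betw ((!) ?L) {..<card S} S"
    by (rule bij_betw_nth) (auto simp: assms)
  have "(\<Sum>t<card S. g (?L ! t) (dl t ?L)) = (\<Sum>t<card S. (\<lambda>i. g i (sorted_list_of_set (S - {i}))) (?L ! t))"
  proof (rule sum.cong)
    fix t assume t: "t \<in> {..<card S}"
    have "sorted_list_of_set (S - {?L!t}) = remove1 (?L!t) ?L"
      using assms by (simp add: sorted_list_of_set_remove)
    also have "\<dots> = dl t ?L" using t assms by (intro remove1_dl) auto
    finally show "g (?L ! t) (dl t ?L) = (\<lambda>i. g i (sorted_list_of_set (S - {i}))) (?L ! t)" by simp
  qed simp
  also have "\<dots> = (\<Sum>i\<in>S. g i (sorted_list_of_set (S - {i})))"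
    by (rule sum.reindex_bij_betw[OF b])
  finally show ?thesis .
qed

lemma sum_pairs:
  fixes H :: "nat \<Rightarrow> nat set \<Rightarrow> 'a::comm_monoid_add"
  assumes r: "r \<ge> 1"
  and vanish: "\<And>i S'. i \<in> {1..n} \<Longrightarrow> S' \<subseteq> {1..n} \<Longrightarrow> i \<in> S' \<Longrightarrow> H i S' = 0"
  shows "(\<Sum>S | S \<subseteq> {1..n} \<and> card S = r. \<Sum>i\<in>S. H i (S - {i}))
       = (\<Sum>i\<in>{1..n}. \<Sum>S' | S' \<subseteq> {1..n} \<and> card S' = r - 1. H i S')"
proof -
  define C where "C r' = {S. S \<subseteq> {1..n} \<and> card S = r'}" for r'
  have finC: "finite (C r')" for r' unfolding C_def by (rule finite_subset[of _ "Pow {1..n}"]) auto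
  define P where "P = Sigma {1..n} (\<lambda>i. {S' \<in> C (r-1). i \<notin> S'})"
  define Q where "Q = Sigma (C r) (\<lambda>S. S)"
  have finP: "finite P" unfolding P_def using finC by auto
  have finQ: "finite Q" unfolding Q_def using finC
    by (intro finite_SigmaI) (auto simp: C_def intro: finite_subset)
  have "(\<Sum>i\<in>{1..n}. \<Sum>S'\<in>C (r-1). H i S') = (\<Sum>i\<in>{1..n}. \<Sum>S'\<in>{S' \<in> C (r-1). i \<notin> S'}. H i S')"
  proof (rule sum.cong[OF refl])
    fix i assume i: "i \<in> {1..n}"
    show "(\<Sum>S'\<in>C (r-1). H i S') = (\<Sum>S'\<in>{S' \<in> C (r-1). i \<notin> S'}. H i S')"
      proof (rule sum.mono_neutral_right[OF finC])
      show "\<forall>x\<in>C (r - 1) - {S' \<in> C (r - 1). i \<notin> S'}. H i x = 0"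
      proof
        fix x assume "x \<in> C (r - 1) - {S' \<in> C (r - 1). i \<notin> S'}"
        then have "x \<subseteq> {1..n}" "i \<in> x" by (auto simp: C_def)
        then show "H i x = 0" by (rule vanish[OF i])
      qed
    qed auto
  qed
  also have "\<dots> = (\<Sum>(i,S')\<in>P. H i S')"
    unfolding P_def by (rule sum.Sigma) (use finC in auto)
  also have "\<dots> = (\<Sum>p\<in>P. H (fst p) (snd p))"
    by (simp add: case_prod_beta)
  also have "\<dots> = (\<Sum>p\<in>P. (\<lambda>q. H (snd q) (fst q - {snd q})) ((\<lambda>p. (insert (fst p) (snd p), fst p)) p))"
    by (rule sum.cong) (auto simp: P_def)
  also have "\<dots> = (\<Sum>q\<in>Q. H (snd q) (fst q - {snd q}))"
  proof (rule sum.reindex_bij_betw)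
    show "bij_betw (\<lambda>p. (insert (fst p) (snd p), fst p)) P Q"
    proof (rule bij_betw_byWitness[where f' = "\<lambda>q. (snd q, fst q - {snd q})"])
      show "\<forall>a\<in>P. (snd (insert (fst a) (snd a), fst a), fst (insert (fst a) (snd a), fst a) - {snd (insert (fst a) (snd a), fst a)}) = a"
        by (auto simp: P_def)
      show "\<forall>a'\<in>Q. (insert (fst (snd a', fst a' - {snd a'})) (snd (snd a', fst a' - {snd a'})), fst (snd a', fst a' - {snd a'})) = a'"
        by (auto simp: Q_def)
      show "(\<lambda>p. (insert (fst p) (snd p), fst p)) ` P \<subseteq> Q"
      proof clarify
        fix i S' assume "(i, S') \<in> P"
        then have "i \<in> {1..n}" "S' \<subseteq> {1..n}" "card S' = r - 1" "i \<notin> S'" by (auto simp: P_def C_def)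
        moreover have "finite S'" using \<open>S' \<subseteq> {1..n}\<close> by (rule finite_subset) simp
        ultimately show "(insert (fst (i, S')) (snd (i, S')), fst (i, S')) \<in> Q"
          using r by (auto simp: Q_def C_def)
      qed
      show "(\<lambda>q. (snd q, fst q - {snd q})) ` Q \<subseteq> P"
      proof clarify
        fix S i assume "(S, i) \<in> Q"
        then have "i \<in> S" "S \<subseteq> {1..n}" "card S = r" by (auto simp: Q_def C_def)
        moreover have "finite S" using \<open>S \<subseteq> {1..n}\<close> by (rule finite_subset) simp
        ultimately show "(snd (S, i), fst (S, i) - {snd (S, i)}) \<in> P"
          by (auto simp: P_def C_def)
      qed
    qed
  qed
  also have "\<dots> = (\<Sum>(S,i)\<in>Q. H i (S - {i}))"
    by (simp add: case_prod_beta)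
  also have "\<dots> = (\<Sum>S\<in>C r. \<Sum>i\<in>S. H i (S - {i}))"
    unfolding Q_def by (rule sum.Sigma[symmetric]) (use finC in \<open>auto simp: C_def intro: finite_subset\<close>)
  finally show ?thesis by (simp add: C_def)
qed

lemma sum_lessThan_add_split: "(\<Sum>j<m+(k::nat). f j) = (\<Sum>j<m. f j) + (\<Sum>t<k. f (m+t))"
  by (induction k) (auto simp: add_ac)

lemma neg_one_pow_sq: "((-1::'a::comm_ring_1)^k) * (-1)^k = 1"
  by (induction k) auto

lemma RelX_rec:
  fixes X :: "nat \<Rightarrow> nat \<Rightarrow> 'a::comm_ring_1"
  assumes lc: "length c = Suc (length a)"
  shows "RelX X n r (a0#a) c = (\<Sum>j<length c. (-1)^j * X a0 (c!j) * RelX X n r a (dl j c))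
     - (if r = 0 then 0 else (\<Sum>i\<in>{1..n}. X a0 i * RelX X n (r-1) (i#a) c))"
proof -
  define C where "C r' = {S. S \<subseteq> {1..n} \<and> card S = r'}" for r'
  have finC: "finite (C r')" for r' unfolding C_def by (rule finite_subset[of _ "Pow {1..n}"]) auto
  have finS: "S \<in> C r' \<Longrightarrow> finite S" for S r' unfolding C_def by (auto intro: finite_subset)
  let ?sl = "sorted_list_of_set :: nat set \<Rightarrow> nat list"
  let ?s = "length a"
  define h where "h i L' = X a0 i * mnr X (i # a @ L') (c @ L')" for i L'
  have lenL: "S \<in> C r \<Longrightarrow> length (?sl S) = r" for S by (simp add: C_def)
  have exp: "mnr X (a0 # (a @ ?sl S)) (c @ ?sl S) =
     (\<Sum>j<length c. (-1)^j * X a0 (c!j) * mnr X (a @ ?sl S) (dl j c @ ?sl S))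
     - (\<Sum>i\<in>S. h i (?sl (S - {i})))" if S: "S \<in> C r" for S
  proof -
    let ?L = "?sl S"
    let ?f = "\<lambda>j. (-1)^j * X a0 ((c @ ?L)!j) * mnr X (a @ ?L) (dl j (c @ ?L))"
    have "mnr X (a0 # (a @ ?L)) (c @ ?L) = (\<Sum>j<length c + r. ?f j)"
    proof -
      have ll: "length (c @ ?L) = length c + r" using lenL[OF S] by simp
      have "mnr X (a0 # (a @ ?L)) (c @ ?L) = (\<Sum>j<length (c @ ?L). ?f j)"
        by (rule mnr_laplace) (simp add: lc ll)
      then show ?thesis by (simp only: ll)
    qed
    also have "\<dots> = (\<Sum>j<length c. ?f j) + (\<Sum>t<r. ?f (length c + t))"
      by (rule sum_lessThan_add_split)
    also have "(\<Sum>j<length c. ?f j) = (\<Sum>j<length c. (-1)^j * X a0 (c!j) * mnr X (a @ ?L) (dl j c @ ?L))"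
      by (rule sum.cong) (auto simp: nth_append dl_def)
    also have "(\<Sum>t<r. ?f (length c + t)) = (\<Sum>t<r. - h (?L!t) (dl t ?L))"
    proof (rule sum.cong[OF refl])
      fix t assume t: "t \<in> {..<r}"
      then have tL: "t < length ?L" using lenL[OF S] by simp
      have d1: "dl (length c + t) (c @ ?L) = c @ dl t ?L" by (simp add: dl_def)
      have d2: "dl (?s + t) (a @ ?L) = a @ dl t ?L" by (simp add: dl_def)
      have mv: "mnr X ([] @ ((a @ ?L)!(?s + t)) # dl (?s + t) (a @ ?L)) (c @ dl t ?L)
          = (-1)^(?s+t) * mnr X ([] @ (a @ ?L)) (c @ dl t ?L)"
        by (rule mnr_move) (use tL in simp)
      then have mv': "mnr X (a @ ?L) (c @ dl t ?L) = (-1)^(?s+t) * mnr X ((?L!t) # a @ dl t ?L) (c @ dl t ?L)"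
        using neg_one_pow_sq[of "?s+t", where 'a='a] by (simp add: d2 nth_append)
      show "?f (length c + t) = - h (?L!t) (dl t ?L)"
        unfolding h_def d1 mv' using neg_one_pow_sq[of "?s+t", where 'a='a]
        by (simp add: lc nth_append power_add mult_ac)
    qed
    also have "(\<Sum>t<r. - h (?L!t) (dl t ?L)) = - (\<Sum>t<card S. h (?L!t) (dl t ?L))"
      using S by (simp add: C_def sum_negf)
    also have "(\<Sum>t<card S. h (?L!t) (dl t ?L)) = (\<Sum>i\<in>S. h i (?sl (S - {i})))"
      using sum_sorted_pos[OF finS[OF S], of h] by simp
    finally show ?thesis by simp
  qed
  have P0: "RelX X n r (a0#a) c = (\<Sum>S\<in>C r. mnr X (a0 # (a @ ?sl S)) (c @ ?sl S))"
    by (simp add: RelX_def C_def)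
  have P1: "(\<Sum>S\<in>C r. mnr X (a0 # (a @ ?sl S)) (c @ ?sl S)) = (\<Sum>S\<in>C r. (\<Sum>j<length c. (-1)^j * X a0 (c!j) * mnr X (a @ ?sl S) (dl j c @ ?sl S)))
        - (\<Sum>S\<in>C r. \<Sum>i\<in>S. h i (?sl (S - {i})))"
    by (simp add: exp sum_subtractf)
  have P2: "(\<Sum>S\<in>C r. (\<Sum>j<length c. (-1)^j * X a0 (c!j) * mnr X (a @ ?sl S) (dl j c @ ?sl S)))
      = (\<Sum>j<length c. (-1)^j * X a0 (c!j) * RelX X n r a (dl j c))"
  proof -
    have R: "RelX X n r a (dl j c) = (\<Sum>S\<in>C r. mnr X (a @ ?sl S) (dl j c @ ?sl S))" for j
      by (simp add: RelX_def C_def)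
    have "(\<Sum>S\<in>C r. (\<Sum>j<length c. (-1)^j * X a0 (c!j) * mnr X (a @ ?sl S) (dl j c @ ?sl S)))
       = (\<Sum>j<length c. \<Sum>S\<in>C r. (-1)^j * X a0 (c!j) * mnr X (a @ ?sl S) (dl j c @ ?sl S))"
      by (rule sum.swap)
    also have "\<dots> = (\<Sum>j<length c. (-1)^j * X a0 (c!j) * RelX X n r a (dl j c))"
      unfolding R by (simp only: sum_distrib_left)
    finally show ?thesis .
  qed
  have P3: "(\<Sum>S\<in>C r. \<Sum>i\<in>S. h i (?sl (S - {i})))
      = (if r = 0 then 0 else (\<Sum>i\<in>{1..n}. X a0 i * RelX X n (r-1) (i#a) c))"
  proof (cases "r = 0")
    case True
    have "S = {}" if "S \<in> C 0" for S
    proof -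
      from that have "S \<subseteq> {1..n}" "card S = 0" by (auto simp: C_def)
      moreover have "finite S" using \<open>S \<subseteq> {1..n}\<close> finite_subset by blast
      ultimately show ?thesis by simp
    qed
    then show ?thesis using True by (auto intro!: sum.neutral)
  next
    case False
    have "(\<Sum>S\<in>C r. \<Sum>i\<in>S. (\<lambda>i S'. h i (?sl S')) i (S - {i}))
        = (\<Sum>i\<in>{1..n}. \<Sum>S'\<in>C (r-1). (\<lambda>i S'. h i (?sl S')) i S')"
      unfolding C_def
    proof (rule sum_pairs[where H = "\<lambda>i S'. h i (?sl S')"])
      show "1 \<le> r" using False by simp
      fix i S' assume i: "i \<in> {1..n}" and S': "S' \<subseteq> {1..n}" and iS: "i \<in> S'"
      have "finite S'" using S' by (rule finite_subset) simp
      then obtain k where k: "k < length (?sl S')" "?sl S' ! k = i"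
        using iS by (metis in_set_conv_nth set_sorted_list_of_set)
      have "mnr X (i # a @ ?sl S') (c @ ?sl S') = 0"
        by (rule mnr_dup[of 0 _ "Suc (?s + k)"]) (use k in \<open>auto simp: nth_append\<close>)
      then show "h i (?sl S') = 0" by (simp add: h_def)
    qed
    then show ?thesis using False
      by (simp add: RelX_def C_def h_def sum_distrib_left)
  qed
  show ?thesis unfolding P0 P1 P2 P3 ..
qed

lemma in_ideal_0: "in_ideal G 0"
  unfolding in_ideal_def by (rule exI[of _ "{}"]) auto

lemma in_ideal_gen: "g \<in> G \<Longrightarrow> in_ideal G g"
  unfolding in_ideal_def by (rule exI[of _ "{g}"], rule exI[of _ "\<lambda>_. 1"]) auto

lemma in_ideal_mult: "in_ideal G x \<Longrightarrow> in_ideal G (y * x)"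
  unfolding in_ideal_def
  apply clarify
  subgoal for F c by (rule exI[of _ F], rule exI[of _ "\<lambda>g. y * c g"]) (auto simp: sum_distrib_left mult.assoc)
  done

lemma in_ideal_add:
  assumes "in_ideal G x" "in_ideal G y" shows "in_ideal G (x + y)"
proof -
  from assms obtain F1 c1 F2 c2 where h: "finite F1" "F1 \<subseteq> G" "x = (\<Sum>g\<in>F1. c1 g * g)"
    "finite F2" "F2 \<subseteq> G" "y = (\<Sum>g\<in>F2. c2 g * g)" unfolding in_ideal_def by blast
  define d where "d g = (if g \<in> F1 then c1 g else 0) + (if g \<in> F2 then c2 g else 0)" for g
  have fin: "finite (F1 \<union> F2)" using h by simp
  have s1: "(\<Sum>g\<in>F1 \<union> F2. (if g \<in> F1 then c1 g else 0) * g) = x"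
  proof -
    have a: "(\<Sum>g\<in>F1 \<union> F2. (if g \<in> F1 then c1 g else 0) * g) = (\<Sum>g\<in>F1 \<union> F2. if g \<in> F1 then c1 g * g else 0)"
      by (rule sum.cong) auto
    have b: "sum (\<lambda>g. c1 g * g) ((F1 \<union> F2) \<inter> F1) = (\<Sum>g\<in>F1 \<union> F2. if g \<in> F1 then c1 g * g else 0)"
      by (rule sum.inter_restrict[OF fin])
    have c: "(F1 \<union> F2) \<inter> F1 = F1" by blast
    show ?thesis using a b c h(3) by simp
  qed
  have s2: "(\<Sum>g\<in>F1 \<union> F2. (if g \<in> F2 then c2 g else 0) * g) = y"
  proof -
    have a: "(\<Sum>g\<in>F1 \<union> F2. (if g \<in> F2 then c2 g else 0) * g) = (\<Sum>g\<in>F1 \<union> F2. if g \<in> F2 then c2 g * g else 0)"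
      by (rule sum.cong) auto
    have b: "sum (\<lambda>g. c2 g * g) ((F1 \<union> F2) \<inter> F2) = (\<Sum>g\<in>F1 \<union> F2. if g \<in> F2 then c2 g * g else 0)"
      by (rule sum.inter_restrict[OF fin])
    have c: "(F1 \<union> F2) \<inter> F2 = F2" by blast
    show ?thesis using a b c h(6) by simp
  qed
  have "x + y = (\<Sum>g\<in>F1 \<union> F2. d g * g)"
    unfolding s1[symmetric] s2[symmetric] d_def distrib_right sum.distrib ..
  moreover have "F1 \<union> F2 \<subseteq> G" using h by blast
  ultimately show ?thesis unfolding in_ideal_def using fin by blast
qed

lemma in_ideal_diff: "in_ideal G x \<Longrightarrow> in_ideal G y \<Longrightarrow> in_ideal G (x - y)"
  using in_ideal_add[of G x "(-1) * y"] in_ideal_mult[of G y "-1"] by simp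

lemma in_ideal_sum: "finite A \<Longrightarrow> (\<And>i. i \<in> A \<Longrightarrow> in_ideal G (f i)) \<Longrightarrow> in_ideal G (sum f A)"
  by (induction A rule: finite_induct) (auto intro: in_ideal_0 in_ideal_add)

lemma set_dl: "set (dl j xs) \<subseteq> set xs"
  unfolding dl_def using set_take_subset set_drop_subset by fastforce

lemma main:
  fixes n r :: nat
  assumes r: "1 \<le> r"
  shows "length c = length a \<Longrightarrow> set a \<subseteq> {1..n} \<Longrightarrow> set c \<subseteq> {1..n}
    \<Longrightarrow> in_ideal (J_gens n :: 'k::field mpoly set) (RelX Phi n r a c)"
proof (induction a arbitrary: c)
  case Nil
  then have c: "c = []" by simp
  show ?case
  proof (cases "r \<le> n")
    case True
    have "RelX Phi n r [] c = (T n r :: 'k mpoly)" by (simp add: c RelX_def T_def minor_eq)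
    moreover have "(T n r :: 'k mpoly) \<in> J_gens n" using True r by (auto simp: J_gens_def)
    ultimately show ?thesis by (simp add: in_ideal_gen)
  next
    case False
    have E: "{S. S \<subseteq> {1..n} \<and> card S = r} = {}"
      using False card_mono[of "{1..n}"] by fastforce
    show ?thesis unfolding RelX_def E by (simp add: in_ideal_0)
  qed
next
  case (Cons a0 a)
  let ?J = "J_gens n :: 'k mpoly set"
  have lc: "length c = Suc (length a)" using Cons.prems by simp
  have a0: "a0 \<in> {1..n}" and sa: "set a \<subseteq> {1..n}" using Cons.prems by auto
  have cj: "j < length c \<Longrightarrow> c!j \<in> {1..n}" for j using Cons.prems(3) nth_mem by blast
  have sq: "x \<in> {1..n} \<Longrightarrow> (Phi_sq n a0 x :: 'k mpoly) \<in> ?J" for x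
    using a0 by (auto simp: J_gens_def)
  have IH: "j < length c \<Longrightarrow> in_ideal ?J (RelX Phi n r a (dl j c))" for j
    by (rule Cons.IH) (use lc sa Cons.prems(3) set_dl[of j c] in auto)
  have e1: "RelX Phi n r (a0#a) c = (\<Sum>j<length c. (-1)^j * Phi a0 (c!j) * RelX Phi n r a (dl j c))
     - (\<Sum>i\<in>{1..n}. Phi a0 i * RelX Phi n (r-1) (i#a) c)"
    using RelX_rec[OF lc, of Phi n r a0] r by simp
  have e2: "RelX Phi n (r-1) (i#a) c = (\<Sum>j<length c. (-1)^j * Phi i (c!j) * RelX Phi n (r-1) a (dl j c))
     - (if r - 1 = 0 then 0 else (\<Sum>k\<in>{1..n}. Phi i k * RelX Phi n (r-1-1) (k#a) c))" for i
    using RelX_rec[OF lc, of Phi n "r-1" i] by simp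
  have e3: "(\<Sum>i\<in>{1..n}. Phi a0 i * RelX Phi n (r-1) (i#a) c :: 'k mpoly)
     = (\<Sum>j<length c. (-1)^j * Phi_sq n a0 (c!j) * RelX Phi n (r-1) a (dl j c))
     - (if r - 1 = 0 then 0 else (\<Sum>k\<in>{1..n}. Phi_sq n a0 k * RelX Phi n (r-1-1) (k#a) c))"
  proof -
    have A: "(\<Sum>i\<in>{1..n}. Phi a0 i * (\<Sum>j<length c. (-1)^j * Phi i (c!j) * RelX Phi n (r-1) a (dl j c)) :: 'k mpoly)
        = (\<Sum>j<length c. (-1)^j * Phi_sq n a0 (c!j) * RelX Phi n (r-1) a (dl j c))"
      by (simp add: sum_distrib_left sum_distrib_right Phi_sq_def mult_ac) (rule sum.swap)
    have B: "(\<Sum>i\<in>{1..n}. Phi a0 i * (\<Sum>k\<in>{1..n}. Phi i k * RelX Phi n (r-1-1) (k#a) c) :: 'k mpoly)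
        = (\<Sum>k\<in>{1..n}. Phi_sq n a0 k * RelX Phi n (r-1-1) (k#a) c)"
      by (simp add: sum_distrib_left sum_distrib_right Phi_sq_def mult_ac) (rule sum.swap)
    show ?thesis
      unfolding e2 right_diff_distrib sum_subtractf A
      using B by auto
  qed
  have t1: "in_ideal ?J (\<Sum>j<length c. (-1)^j * Phi a0 (c!j) * RelX Phi n r a (dl j c))"
  proof (rule in_ideal_sum)
    fix j assume "j \<in> {..<length c}"
    then have "in_ideal ?J (((-1)^j * Phi a0 (c!j)) * RelX Phi n r a (dl j c))"
      using IH by (intro in_ideal_mult) simp
    then show "in_ideal ?J ((-1)^j * Phi a0 (c!j) * RelX Phi n r a (dl j c))" .
  qed simp
  have t2: "in_ideal ?J (\<Sum>j<length c. (-1)^j * Phi_sq n a0 (c!j) * RelX Phi n (r-1) a (dl j c))"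
  proof (rule in_ideal_sum)
    fix j assume j: "j \<in> {..<length c}"
    have "in_ideal ?J (((-1)^j * RelX Phi n (r-1) a (dl j c)) * Phi_sq n a0 (c!j))"
      using j by (intro in_ideal_mult in_ideal_gen sq cj) simp
    then show "in_ideal ?J ((-1)^j * Phi_sq n a0 (c!j) * RelX Phi n (r-1) a (dl j c))"
      by (simp only: mult_ac)
  qed simp
  have t3: "in_ideal ?J (if r - 1 = 0 then 0 else (\<Sum>k\<in>{1..n}. Phi_sq n a0 k * RelX Phi n (r-1-1) (k#a) c))"
  proof (cases "r - 1 = 0")
    case True then show ?thesis by (simp add: in_ideal_0)
  next
    case False
    have "in_ideal ?J (\<Sum>k\<in>{1..n}. Phi_sq n a0 k * RelX Phi n (r-1-1) (k#a) c)"
    proof (rule in_ideal_sum)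
      fix k assume k: "k \<in> {1..n}"
      have "in_ideal ?J (RelX Phi n (r-1-1) (k#a) c * Phi_sq n a0 k)"
        using k by (intro in_ideal_mult in_ideal_gen sq)
      then show "in_ideal ?J (Phi_sq n a0 k * RelX Phi n (r-1-1) (k#a) c)"
        by (simp only: mult.commute)
    qed simp
    then show ?thesis using False by simp
  qed
  show ?case
    unfolding e1 e3 by (intro in_ideal_diff t1 t2 t3)
qed

theorem lemma3:
  fixes n p r :: nat and as bs :: "nat list"
  assumes "1 \<le> n" and "1 \<le> p" and "p \<le> n" and "1 \<le> r" and "r \<le> p"
    and "length as = p - r" and "length bs = p - r"
    and "set as \<subseteq> {1..n}" and "set bs \<subseteq> {1..n}"
  shows "in_ideal (J_gens n :: 'k::field mpoly set) (Rel n r as bs)"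
  unfolding Rel_eq by (rule main[OF assms(4)]) (use assms in auto)

end
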